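(* Let $k$ be a positive integer and let $D$ be a digraph with no isolated vertex. Then $\gamma_{trk}(D)\le (k+1)\gamma(D)$. Moreover, if $\gamma_{trk}(D)=(k+1)\gamma(D)$, then every $\gamma(D)$-set is a packing in $D$.
   Context: All digraphs are finite, with no loops or multiple arcs (pairs of opposite arcs are allowed). For a vertex $v$, $N^-(v)$ and $N^+(v)$ denote its sets of in-neighbors and out-neighbors, and $N^+[v]=N^+(v)\cup\{v\}$; for $X\subseteq V(D)$, $N^+[X]=\bigcup_{v\in X}N^+[v]$. A vertex is isolated if it has no in-neighbor and no out-neighbor. For a positive integer $k$, a $k$-rainbow dominating function ($k$RDF) on $D$ is a function $f:V(D)\to\mathcal P(\{1,\dots,k\})$ such that every vertex $v$ with $f(v)=\emptyset$ satisfies $\bigcup_{u\in N^-(v)}f(u)=\{1,\dots,k\}$. Its weight is $\omega(f)=\sum_{v\in V(D)}|f(v)|$. If $D$ has no isolated vertex, a total $k$-rainbow dominating function (T$k$RDF) on $D$ is a $k$RDF $f$ such that the subdigraph of $D$ induced by $\{v: f(v)\neq\emptyset\}$ has no isolated vertex; $\gamma_{trk}(D)$ is the minimum weight of a T$k$RDF on $D$. A set $S\subseteq V(D)$ is a dominating set if $N^+[S]=V(D)$; $\gamma(D)$ is the minimum size of a dominating set, and a dominating set of size $\gamma(D)$ is a $\gamma(D)$-set. A set $S$ is a packing if $N^+[u]\cap N^+[v]=\emptyset$ for all distinct $u,v\in S$. *)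

theory Defs
  imports Main
begin

definition digraph :: "'a set \<Rightarrow> ('a \<times> 'a) set \<Rightarrow> bool" where
  "digraph V A \<longleftrightarrow> finite V \<and> A \<subseteq> V \<times> V \<and> (\<forall>v. (v, v) \<notin> A)"

definition in_nbrs :: "('a \<times> 'a) set \<Rightarrow> 'a \<Rightarrow> 'a set" where
  "in_nbrs A v = {u. (u, v) \<in> A}"

definition out_nbrs :: "('a \<times> 'a) set \<Rightarrow> 'a \<Rightarrow> 'a set" where
  "out_nbrs A v = {w. (v, w) \<in> A}"

definition closed_out_nbhd :: "('a \<times> 'a) set \<Rightarrow> 'a \<Rightarrow> 'a set" where
  "closed_out_nbhd A v = insert v (out_nbrs A v)"

definition closed_out_nbhd_set :: "('a \<times> 'a) set \<Rightarrow> 'a set \<Rightarrow> 'a set" where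
  "closed_out_nbhd_set A X = (\<Union>v\<in>X. closed_out_nbhd A v)"

definition isolated_in :: "'a set \<Rightarrow> ('a \<times> 'a) set \<Rightarrow> 'a \<Rightarrow> bool" where
  "isolated_in V A v \<longleftrightarrow> v \<in> V \<and> in_nbrs A v = {} \<and> out_nbrs A v = {}"

definition no_isolated :: "'a set \<Rightarrow> ('a \<times> 'a) set \<Rightarrow> bool" where
  "no_isolated V A \<longleftrightarrow> (\<forall>v\<in>V. \<not> isolated_in V A v)"

definition induced_arcs :: "('a \<times> 'a) set \<Rightarrow> 'a set \<Rightarrow> ('a \<times> 'a) set" where
  "induced_arcs A S = A \<inter> (S \<times> S)"

definition is_kRDF :: "'a set \<Rightarrow> ('a \<times> 'a) set \<Rightarrow> nat \<Rightarrow> ('a \<Rightarrow> nat set) \<Rightarrow> bool" where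
  "is_kRDF V A k f \<longleftrightarrow>
     (\<forall>v\<in>V. f v \<subseteq> {1..k}) \<and> (\<forall>v. v \<notin> V \<longrightarrow> f v = {}) \<and>
     (\<forall>v\<in>V. f v = {} \<longrightarrow> (\<Union>u\<in>in_nbrs A v. f u) = {1..k})"

definition weight :: "'a set \<Rightarrow> ('a \<Rightarrow> nat set) \<Rightarrow> nat" where
  "weight V f = (\<Sum>v\<in>V. card (f v))"

definition is_TkRDF :: "'a set \<Rightarrow> ('a \<times> 'a) set \<Rightarrow> nat \<Rightarrow> ('a \<Rightarrow> nat set) \<Rightarrow> bool" where
  "is_TkRDF V A k f \<longleftrightarrow> is_kRDF V A k f \<and>
     no_isolated {v\<in>V. f v \<noteq> {}} (induced_arcs A {v\<in>V. f v \<noteq> {}})"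

definition gamma_trk :: "'a set \<Rightarrow> ('a \<times> 'a) set \<Rightarrow> nat \<Rightarrow> nat" where
  "gamma_trk V A k = (LEAST w. \<exists>f. is_TkRDF V A k f \<and> weight V f = w)"

definition dominating_set :: "'a set \<Rightarrow> ('a \<times> 'a) set \<Rightarrow> 'a set \<Rightarrow> bool" where
  "dominating_set V A S \<longleftrightarrow> S \<subseteq> V \<and> closed_out_nbhd_set A S = V"

definition domination_number :: "'a set \<Rightarrow> ('a \<times> 'a) set \<Rightarrow> nat" where
  "domination_number V A = (LEAST n. \<exists>S. dominating_set V A S \<and> card S = n)"

definition gamma_set :: "'a set \<Rightarrow> ('a \<times> 'a) set \<Rightarrow> 'a set \<Rightarrow> bool" where
  "gamma_set V A S \<longleftrightarrow> dominating_set V A S \<and> card S = domination_number V A"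

definition packing :: "('a \<times> 'a) set \<Rightarrow> 'a set \<Rightarrow> bool" where
  "packing A S \<longleftrightarrow> (\<forall>u\<in>S. \<forall>v\<in>S. u \<noteq> v \<longrightarrow> closed_out_nbhd A u \<inter> closed_out_nbhd A v = {})"

end

theory Submission
  imports Defs
begin

definition fS :: "nat \<Rightarrow> 'a set \<Rightarrow> ('a \<Rightarrow> 'a) \<Rightarrow> 'a \<Rightarrow> nat set" where
  "fS k S g v = (if v \<in> S then {1..k} else if v \<in> g ` S then {1} else {})"


lemma construct:
  assumes dg: "digraph V A" and k: "k \<ge> 1" and dom: "dominating_set V A S"
    and g: "\<forall>s\<in>S. g s \<in> V \<and> ((s, g s) \<in> A \<or> (g s, s) \<in> A)"
  shows "gamma_trk V A k \<le> k * card S + card (g ` S - S)"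
proof -
  let ?f = "fS k S g"
  have fin: "finite V" using dg by (simp add: digraph_def)
  have SV: "S \<subseteq> V" using dom by (simp add: dominating_set_def)
  have gV: "g ` S \<subseteq> V" using g by auto
  have finS: "finite S" using fin SV finite_subset by blast
  have AV: "A \<subseteq> V \<times> V" using dg by (simp add: digraph_def)
  let ?T = "{v\<in>V. ?f v \<noteq> {}}"
  have T: "?T = S \<union> g ` S" using SV gV k by (auto simp: fS_def)
  have kRDF: "is_kRDF V A k ?f"
    unfolding is_kRDF_def
  proof (intro conjI ballI allI impI)
    fix v assume "v \<in> V" thus "?f v \<subseteq> {1..k}" using k by (auto simp: fS_def)
  next
    fix v assume "v \<notin> V" thus "?f v = {}" using SV gV by (auto simp: fS_def)
  next
    fix v assume v: "v \<in> V" and e: "?f v = {}"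
    hence vS: "v \<notin> S" using k by (auto simp: fS_def)
    from dom v obtain s where s: "s \<in> S" "v \<in> closed_out_nbhd A s"
      by (auto simp: dominating_set_def closed_out_nbhd_set_def)
    hence "(s, v) \<in> A" using vS by (auto simp: closed_out_nbhd_def out_nbrs_def)
    hence sin: "s \<in> in_nbrs A v" by (simp add: in_nbrs_def)
    show "(\<Union>u\<in>in_nbrs A v. ?f u) = {1..k}"
    proof
      show "(\<Union>u\<in>in_nbrs A v. ?f u) \<subseteq> {1..k}" using k by (auto simp: fS_def)
      show "{1..k} \<subseteq> (\<Union>u\<in>in_nbrs A v. ?f u)" using sin s(1) by (auto simp: fS_def)
    qed
  qed
  have noiso: "no_isolated ?T (induced_arcs A ?T)"
    unfolding no_isolated_def
  proof
    fix w assume w: "w \<in> ?T"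
    hence "w \<in> S \<union> g ` S" using T by simp
    then obtain s where s: "s \<in> S \<union> g ` S" and sw: "(s, w) \<in> A \<or> (w, s) \<in> A"
    proof
      assume "w \<in> S" thus ?thesis using g that by blast
    next
      assume "w \<in> g ` S" then obtain t where "t \<in> S" "w = g t" by blast
      thus ?thesis using g that by blast
    qed
    have "s \<in> ?T" "w \<in> ?T" using s w T by auto
    thus "\<not> isolated_in ?T (induced_arcs A ?T) w" using sw
      by (auto simp: isolated_in_def in_nbrs_def out_nbrs_def induced_arcs_def)
  qed
  have TK: "is_TkRDF V A k ?f" using kRDF noiso by (simp add: is_TkRDF_def)
  have "weight V ?f = (\<Sum>v\<in>V. (if v \<in> S then k else 0) + (if v \<in> g ` S - S then 1 else 0))"
    unfolding weight_def by (rule sum.cong) (auto simp: fS_def)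
  also have "\<dots> = (\<Sum>v\<in>V. if v \<in> S then k else 0) + (\<Sum>v\<in>V. if v \<in> g ` S - S then 1 else 0)"
    by (rule sum.distrib)
  also have "(\<Sum>v\<in>V. if v \<in> S then k else 0) = k * card S"
    using fin SV by (simp add: sum.If_cases Int_absorb1)
  also have "(\<Sum>v\<in>V. if v \<in> g ` S - S then 1 else (0::nat)) = card (g ` S - S)"
  proof -
    have "V \<inter> {v \<in> g ` S. v \<notin> S} = g ` S - S" using gV by auto
    thus ?thesis using fin by (simp add: sum.If_cases)
  qed
  finally have "weight V ?f = k * card S + card (g ` S - S)" .
  with TK show ?thesis unfolding gamma_trk_def by (metis (mono_tags, lifting) Least_le)
qed

theorem theorem2p1:
  fixes V :: "'a set" and A :: "('a \<times> 'a) set" and k :: nat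
  assumes "digraph V A" and "k \<ge> 1" and "no_isolated V A"
  shows "gamma_trk V A k \<le> (k + 1) * domination_number V A \<and>
         (gamma_trk V A k = (k + 1) * domination_number V A \<longrightarrow>
           (\<forall>S. gamma_set V A S \<longrightarrow> packing A S))"
proof -
  have fin: "finite V" using assms(1) by (simp add: digraph_def)
  have AV: "A \<subseteq> V \<times> V" using assms(1) by (simp add: digraph_def)
  have "\<forall>s\<in>V. \<exists>w. w \<in> V \<and> ((s, w) \<in> A \<or> (w, s) \<in> A)"
  proof
    fix s assume s: "s \<in> V"
    hence "\<not> isolated_in V A s" using assms(3) by (simp add: no_isolated_def)
    then obtain w where "(s, w) \<in> A \<or> (w, s) \<in> A" using s
      by (auto simp: isolated_in_def in_nbrs_def out_nbrs_def)
    thus "\<exists>w. w \<in> V \<and> ((s, w) \<in> A \<or> (w, s) \<in> A)" using AV by blast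
  qed
  then obtain g0 where g0: "\<forall>s\<in>V. g0 s \<in> V \<and> ((s, g0 s) \<in> A \<or> (g0 s, s) \<in> A)"
    by metis
  have domV: "dominating_set V A V"
    using AV by (auto simp: dominating_set_def closed_out_nbhd_set_def closed_out_nbhd_def out_nbrs_def)
  have "\<exists>S. dominating_set V A S \<and> card S = domination_number V A"
    unfolding domination_number_def
    by (rule LeastI_ex[where P="\<lambda>n. \<exists>S. dominating_set V A S \<and> card S = n"]) (use domV in blast)
  then obtain S0 where S0: "dominating_set V A S0" "card S0 = domination_number V A" by blast
  have S0V: "S0 \<subseteq> V" using S0 by (simp add: dominating_set_def)
  have finS0: "finite S0" using fin S0V finite_subset by blast
  have "gamma_trk V A k \<le> k * card S0 + card (g0 ` S0 - S0)"
    using construct[OF assms(1,2) S0(1)] g0 S0V by blast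
  also have "card (g0 ` S0 - S0) \<le> card S0"
    using finS0 by (meson card_Diff_subset card_image_le finite_imageI le_trans card_mono Diff_subset)
  finally have part1: "gamma_trk V A k \<le> (k + 1) * domination_number V A" using S0 by simp
  have part2: "packing A S" if eq: "gamma_trk V A k = (k + 1) * domination_number V A"
    and gs: "gamma_set V A S" for S
  proof (rule ccontr)
    assume np: "\<not> packing A S"
    have domS: "dominating_set V A S" and cS: "card S = domination_number V A"
      using gs by (auto simp: gamma_set_def)
    have SV: "S \<subseteq> V" using domS by (simp add: dominating_set_def)
    have finS: "finite S" using fin SV finite_subset by blast
    from np obtain u v x where uv: "u \<in> S" "v \<in> S" "u \<noteq> v"
      and x: "x \<in> closed_out_nbhd A u" "x \<in> closed_out_nbhd A v"
      unfolding packing_def by blast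
    have "\<exists>g. (\<forall>s\<in>S. g s \<in> V \<and> ((s, g s) \<in> A \<or> (g s, s) \<in> A)) \<and> card (g ` S - S) < card S"
    proof (cases "x = u \<or> x = v")
      case True
      then obtain a b where ab: "a \<in> S" "b \<in> S" "a \<noteq> b" "(b, a) \<in> A"
        using x uv by (auto simp: closed_out_nbhd_def out_nbrs_def)
      define g where "g = g0(b := a)"
      have G: "\<forall>s\<in>S. g s \<in> V \<and> ((s, g s) \<in> A \<or> (g s, s) \<in> A)"
        using g0 SV ab by (auto simp: g_def)
      have "g ` S - S \<subseteq> g ` (S - {b})" using ab by (auto simp: g_def)
      hence "card (g ` S - S) \<le> card (g ` (S - {b}))" using finS by (simp add: card_mono)
      also have "\<dots> \<le> card (S - {b})" using finS by (simp add: card_image_le)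
      also have "\<dots> < card S" using finS ab by (metis card_Diff1_less)
      finally show ?thesis using G by blast
    next
      case False
      hence xa: "(u, x) \<in> A" "(v, x) \<in> A" using x by (auto simp: closed_out_nbhd_def out_nbrs_def)
      define g where "g = g0(u := x, v := x)"
      have G: "\<forall>s\<in>S. g s \<in> V \<and> ((s, g s) \<in> A \<or> (g s, s) \<in> A)"
        using g0 SV xa AV by (auto simp: g_def)
      have "g ` S = g ` (S - {u})" using uv by (auto simp: g_def)
      hence "card (g ` S - S) \<le> card (g ` (S - {u}))" using finS by (metis Diff_subset card_mono finite_Diff finite_imageI)
      also have "\<dots> \<le> card (S - {u})" using finS by (simp add: card_image_le)
      also have "\<dots> < card S" using finS uv by (metis card_Diff1_less)
      finally show ?thesis using G by blast
    qed
    then obtain g where g: "\<forall>s\<in>S. g s \<in> V \<and> ((s, g s) \<in> A \<or> (g s, s) \<in> A)"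
      and lt: "card (g ` S - S) < card S" by blast
    have "gamma_trk V A k \<le> k * card S + card (g ` S - S)"
      using construct[OF assms(1,2) domS g] .
    also have "\<dots> < (k + 1) * card S" using lt by simp
    finally show False using eq cS by simp
  qed
  show ?thesis using part1 part2 by blast
qed

end
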